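(* Fix a bounded subset $E\subset\mathbb C$. There exists $\ell=\ell(E)\ge1$ such that for all sufficiently small $\epsilon>0$, $$a_tkmn_z\in H_{\ell\epsilon}\,m\,a_t\,n_z\,U_{\ell\epsilon}$$ holds for any $m\in M$, $t>0$, $z\in E$ and $k\in K_\epsilon$.
   Context: $G=\mathrm{PSL}_2(\mathbb C)$, $K=\mathrm{PSU}(2)$, $a_t=\mathrm{diag}(e^{t/2},e^{-t/2})$, $M=\{\mathrm{diag}(e^{i\theta},e^{-i\theta})\}$, $n_z=\begin{pmatrix}1&z\\0&1\end{pmatrix}$, $H$ the stabilizer in $G$ of the unit circle centered at $0$. With a fixed left-invariant metric on $G$, $U_\epsilon$ is the $\epsilon$-ball around $e$, and for $W\subset G$, $W_\epsilon=W\cap U_\epsilon$ (so $K_\epsilon=K\cap U_\epsilon$, $H_{\ell\epsilon}=H\cap U_{\ell\epsilon}$). *)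

theory Defs
  imports "HOL-Analysis.Analysis"
begin

text \<open>G = PSL_2(C) is modelled through its double cover SL_2(C): elements of G are
  represented by matrices of determinant 1, and two representatives A, B denote the same
  element of G iff A = B or A = -B. All subsets of G below are pulled back to sign-closed
  subsets of SL_2(C).\<close>

type_synonym cmat = "complex^2^2"

definition mat2 :: "complex \<Rightarrow> complex \<Rightarrow> complex \<Rightarrow> complex \<Rightarrow> cmat" where
  "mat2 a b c d = (\<chi> i j. if i = 1 then (if j = 1 then a else b) else (if j = 1 then c else d))"

definition SL2 :: "cmat set" where
  "SL2 = {A. det A = 1}"

definition psl_eq :: "cmat \<Rightarrow> cmat \<Rightarrow> bool" where
  "psl_eq A B \<longleftrightarrow> A = B \<or> A = - B"

text \<open>Reference size of g near the identity: min over the two lifts of the Frobenius distance to I.\<close>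
definition rho :: "cmat \<Rightarrow> real" where
  "rho A = min (norm (A - mat 1)) (norm (A + mat 1))"

text \<open>A left-invariant metric on PSL_2(C) (as a function on representatives) which near the
  identity is bi-Lipschitz comparable to the standard (matrix) distance -- this holds for every
  left-invariant Riemannian metric.\<close>
definition psl_left_inv_metric :: "(cmat \<Rightarrow> cmat \<Rightarrow> real) \<Rightarrow> bool" where
  "psl_left_inv_metric d \<longleftrightarrow>
     (\<forall>A\<in>SL2. \<forall>B\<in>SL2. d A B \<ge> 0 \<and> (d A B = 0 \<longleftrightarrow> psl_eq A B) \<and> d A B = d B A
        \<and> d (- A) B = d A B \<and> d A (- B) = d A B) \<and>
     (\<forall>A\<in>SL2. \<forall>B\<in>SL2. \<forall>C\<in>SL2. d A C \<le> d A B + d B C) \<and>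
     (\<forall>A\<in>SL2. \<forall>B\<in>SL2. \<forall>C\<in>SL2. d (C ** A) (C ** B) = d A B) \<and>
     (\<exists>c>0. \<exists>\<delta>>0. \<forall>A\<in>SL2. min (rho A) (d (mat 1) A) < \<delta> \<longrightarrow>
         c * rho A \<le> d (mat 1) A \<and> d (mat 1) A \<le> rho A / c)"

definition Uball :: "(cmat \<Rightarrow> cmat \<Rightarrow> real) \<Rightarrow> real \<Rightarrow> cmat set" where
  "Uball d r = {A\<in>SL2. d (mat 1) A < r}"

definition adj :: "cmat \<Rightarrow> cmat" where
  "adj A = (\<chi> i j. cnj (A $ j $ i))"

definition Kgrp :: "cmat set" where
  "Kgrp = {A\<in>SL2. A ** adj A = mat 1}"

definition mob :: "cmat \<Rightarrow> complex \<Rightarrow> complex" where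
  "mob A w = (A$1$1 * w + A$1$2) / (A$2$1 * w + A$2$2)"

text \<open>H = stabilizer (setwise) of the unit circle centred at 0, acting on the Riemann sphere:
  g maps the circle into itself (never to infinity) and onto itself.\<close>
definition Hgrp :: "cmat set" where
  "Hgrp = {A\<in>SL2.
     (\<forall>w. norm w = 1 \<longrightarrow> A$2$1 * w + A$2$2 \<noteq> 0 \<and> norm (mob A w) = 1) \<and>
     (\<forall>u. norm u = 1 \<longrightarrow> (\<exists>w. norm w = 1 \<and> mob A w = u))}"

definition a_t :: "real \<Rightarrow> cmat" where
  "a_t t = mat2 (of_real (exp (t/2))) 0 0 (of_real (exp (-t/2)))"

definition m_th :: "real \<Rightarrow> cmat" where
  "m_th \<theta> = mat2 (cis \<theta>) 0 0 (cis (-\<theta>))"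

definition n_z :: "complex \<Rightarrow> cmat" where
  "n_z z = mat2 1 z 0 1"

end

theory Submission imports Defs begin

lemma norm_le_sum_vec: "norm (x::'a::real_normed_vector^'n) \<le> (\<Sum>i\<in>UNIV. norm (x$i))"
  unfolding norm_vec_def by (rule L2_set_le_sum) simp

lemma norm_mat_le: "norm (A::cmat) \<le> (\<Sum>i\<in>UNIV. \<Sum>j\<in>UNIV. norm (A$i$j))"
proof -
  have "norm A \<le> (\<Sum>i\<in>UNIV. norm (A$i))" by (rule norm_le_sum_vec)
  also have "\<dots> \<le> (\<Sum>i\<in>UNIV. \<Sum>j\<in>UNIV. norm (A$i$j))"
    by (intro sum_mono norm_le_sum_vec)
  finally show ?thesis .
qed

lemma entry_le: "norm ((A::cmat)$i$j) \<le> norm A"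
proof -
  have "norm (A$i$j) \<le> norm (A$i)" by (rule Finite_Cartesian_Product.norm_nth_le)
  also have "\<dots> \<le> norm A" by (rule Finite_Cartesian_Product.norm_nth_le)
  finally show ?thesis .
qed

lemma conj_bound:
  fixes P Q X :: cmat
  assumes P: "\<And>i j. norm (P$i$j) \<le> b" and Q: "\<And>i j. norm (Q$i$j) \<le> b"
  shows "norm (P ** X ** Q) \<le> 16 * b^2 * norm X"
proof -
  have b0: "0 \<le> b" using P[of 1 1] norm_ge_zero order_trans by blast
  have e: "norm ((P ** X ** Q)$i$l) \<le> 4 * b^2 * norm X" for i l
  proof -
    have "(P ** X ** Q)$i$l = (\<Sum>k\<in>UNIV. (\<Sum>j\<in>UNIV. P$i$j * X$j$k) * Q$k$l)"
      by (simp add: matrix_matrix_mult_def)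
    also have "norm \<dots> \<le> (\<Sum>k\<in>(UNIV::2 set). (\<Sum>j\<in>(UNIV::2 set). b * norm X) * b)"
    proof -
      have "norm (P$i$j * X$j$k) \<le> b * norm X" for j k
        unfolding norm_mult by (intro mult_mono P entry_le b0) auto
      note h = this
      have "norm ((\<Sum>j\<in>UNIV. P$i$j * X$j$k) * Q$k$l) \<le> (\<Sum>j\<in>(UNIV::2 set). b * norm X) * b" for k
        unfolding norm_mult
        by (intro mult_mono Q order_trans[OF norm_sum] sum_mono h) (auto intro!: sum_nonneg b0 mult_nonneg_nonneg)
      then show ?thesis by (intro order_trans[OF norm_sum] sum_mono) 
    qed
    also have "\<dots> = 4 * b^2 * norm X" by (simp add: sum_2 power2_eq_square)
    finally show ?thesis .
  qed
  have "norm (P ** X ** Q) \<le> (\<Sum>i\<in>(UNIV::2 set). \<Sum>j\<in>(UNIV::2 set). 4 * b^2 * norm X)"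
    by (rule order_trans[OF norm_mat_le]) (intro sum_mono e)
  also have "\<dots> = 16 * b^2 * norm X" by (simp add: sum_2)
  finally show ?thesis .
qed

lemma mat2_mult: "mat2 a b c d ** mat2 a' b' c' d' = mat2 (a*a'+b*c') (a*b'+b*d') (c*a'+d*c') (c*b'+d*d')"
  by (simp add: vec_eq_iff forall_2 matrix_matrix_mult_def mat2_def sum_2)

lemma mat1_mat2: "(mat 1 :: cmat) = mat2 1 0 0 1"
  by (simp add: vec_eq_iff forall_2 mat_def mat2_def)

lemma mat2_entries: "norm a \<le> r \<Longrightarrow> norm b \<le> r \<Longrightarrow> norm c \<le> r \<Longrightarrow> norm e \<le> r \<Longrightarrow> norm ((mat2 a b c e)$i$j) \<le> r"
  using exhaust_2[of i] exhaust_2[of j] by (auto simp: mat2_def)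

lemma mm_ldiff: "(A::cmat) ** (B - C) = A ** B - A ** C"
  by (simp add: vec_eq_iff matrix_matrix_mult_def sum_subtractf ring_distribs)
lemma mm_rdiff: "((B::cmat) - C) ** A = B ** A - C ** A"
  by (simp add: vec_eq_iff matrix_matrix_mult_def sum_subtractf ring_distribs)
lemma mm_ladd: "(A::cmat) ** (B + C) = A ** B + A ** C"
  by (simp add: vec_eq_iff matrix_matrix_mult_def sum.distrib ring_distribs)
lemma mm_radd: "((B::cmat) + C) ** A = B ** A + C ** A"
  by (simp add: vec_eq_iff matrix_matrix_mult_def sum.distrib ring_distribs)

lemma rho_conj:
  fixes P Q k :: cmat
  assumes PQ: "Q ** P = mat 1"
    and P: "\<And>i j. norm (P$i$j) \<le> b" and Q: "\<And>i j. norm (Q$i$j) \<le> b"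
  shows "rho (Q ** k ** P) \<le> 16 * b^2 * rho k"
proof -
  have "Q ** k ** P - mat 1 = Q ** (k - mat 1) ** P"
    by (simp add: mm_ldiff mm_rdiff PQ matrix_mul_assoc)
  moreover have "Q ** k ** P + mat 1 = Q ** (k + mat 1) ** P"
    by (simp add: mm_ladd mm_radd PQ matrix_mul_assoc)
  ultimately have "norm (Q ** k ** P - mat 1) \<le> 16 * b^2 * norm (k - mat 1)"
     "norm (Q ** k ** P + mat 1) \<le> 16 * b^2 * norm (k + mat 1)"
    using conj_bound[OF Q P] by auto
  then show ?thesis unfolding rho_def min_def by auto
qed

lemma m_inv: "m_th (-\<theta>) ** m_th \<theta> = mat 1" "m_th \<theta> ** m_th (-\<theta>) = mat 1"
  by (simp_all add: m_th_def mat2_mult mat1_mat2 cis_mult)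
lemma n_inv: "n_z (-z) ** n_z z = mat 1" "n_z z ** n_z (-z) = mat 1"
  by (simp_all add: n_z_def mat2_mult mat1_mat2)
lemma ma_comm: "m_th \<theta> ** a_t t = a_t t ** m_th \<theta>"
  by (simp add: m_th_def a_t_def mat2_mult mult.commute)

lemma key_eq:
  "a_t t ** k ** m_th \<theta> ** n_z z =
   mat 1 ** m_th \<theta> ** a_t t ** n_z z ** (n_z (-z) ** m_th (-\<theta>) ** k ** (m_th \<theta> ** n_z z))"
proof -
  have e1: "X ** n_z z ** n_z (-z) = X" for X
    by (simp add: matrix_mul_assoc[symmetric] n_inv)
  have e2: "X ** m_th \<theta> ** m_th (-\<theta>) = X" for X
    by (simp add: matrix_mul_assoc[symmetric] m_inv)
  show ?thesis by (simp add: matrix_mul_assoc ma_comm e1 e2)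
qed

lemma P_bounds:
  assumes "norm z \<le> B" "0 \<le> B"
  shows "norm ((m_th \<theta> ** n_z z)$i$j) \<le> 1 + B" "norm ((n_z (-z) ** m_th (-\<theta>))$i$j) \<le> 1 + B"
  using assms by (auto simp: m_th_def n_z_def mat2_mult norm_mult intro!: mat2_entries)

lemma I_H: "mat 1 \<in> Hgrp"
proof -
  have "(mat 1::cmat) $ 1 $ 1 = 1" "(mat 1::cmat) $ 2 $ 2 = 1" "(mat 1::cmat) $ 1 $ 2 = 0" "(mat 1::cmat) $ 2 $ 1 = 0"
    by (simp_all add: mat_def)
  then show ?thesis unfolding Hgrp_def SL2_def mob_def by auto
qed

theorem proposition4p4:
  fixes d :: "cmat \<Rightarrow> cmat \<Rightarrow> real" and E :: "complex set"
  assumes "psl_left_inv_metric d" and "bounded E"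
  shows "\<exists>l::real\<ge>1. \<exists>\<epsilon>0>0. \<forall>\<epsilon>. 0 < \<epsilon> \<and> \<epsilon> < \<epsilon>0 \<longrightarrow>
           (\<forall>\<theta>::real. \<forall>t::real. \<forall>z\<in>E. \<forall>k\<in>Kgrp \<inter> Uball d \<epsilon>. t > 0 \<longrightarrow>
              (\<exists>h\<in>Hgrp \<inter> Uball d (l * \<epsilon>). \<exists>u\<in>Uball d (l * \<epsilon>).
                 psl_eq (a_t t ** k ** m_th \<theta> ** n_z z) (h ** m_th \<theta> ** a_t t ** n_z z ** u)))"
proof -
  from assms(1) obtain c \<delta> where c: "c > 0" and \<delta>: "\<delta> > 0"
    and cd: "\<And>A. A \<in> SL2 \<Longrightarrow> min (rho A) (d (mat 1) A) < \<delta> \<Longrightarrow>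
         c * rho A \<le> d (mat 1) A \<and> d (mat 1) A \<le> rho A / c"
    and dnn: "\<And>A B. A \<in> SL2 \<Longrightarrow> B \<in> SL2 \<Longrightarrow> d A B \<ge> 0 \<and> (d A B = 0 \<longleftrightarrow> psl_eq A B)"
    unfolding psl_left_inv_metric_def by metis
  from assms(2) obtain B0 where B0: "\<And>z. z \<in> E \<Longrightarrow> norm z \<le> B0"
    unfolding bounded_iff by blast
  define B where "B = max B0 0"
  have B: "\<And>z. z \<in> E \<Longrightarrow> norm z \<le> B" "0 \<le> B" using B0 unfolding B_def by force+
  define C where "C = 16 * (1 + B)^2"
  have "1 \<le> (1+B)^2" by (rule one_le_power) (use B in simp)
  then have C1: "C \<ge> 1" unfolding C_def by linarith
  define l where "l = max 1 (C / c^2)"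
  define e0 where "e0 = min \<delta> (\<delta> * c / C)"
  have l1: "l \<ge> 1" unfolding l_def by simp
  have e0: "e0 > 0" unfolding e0_def using \<delta> c C1 by simp
  have I1: "mat 1 \<in> SL2" by (simp add: SL2_def)
  have main: "\<exists>h\<in>Hgrp \<inter> Uball d (l * \<epsilon>). \<exists>u\<in>Uball d (l * \<epsilon>).
                 psl_eq (a_t t ** k ** m_th \<theta> ** n_z z) (h ** m_th \<theta> ** a_t t ** n_z z ** u)"
    if \<epsilon>: "0 < \<epsilon> \<and> \<epsilon> < e0" and z: "z \<in> E" and k: "k \<in> Kgrp \<inter> Uball d \<epsilon>"
    for \<epsilon> \<theta> t :: real and z k
  proof -
    define P where "P = m_th \<theta> ** n_z z"
    define Q where "Q = n_z (-z) ** m_th (-\<theta>)"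
    define u where "u = Q ** k ** P"
    have QP: "Q ** P = mat 1" unfolding P_def Q_def
      by (simp add: matrix_mul_assoc[symmetric]) (simp add: matrix_mul_assoc m_inv n_inv)
    have kS: "k \<in> SL2" and dk: "d (mat 1) k < \<epsilon>" using k by (auto simp: Uball_def Kgrp_def)
    have uS: "u \<in> SL2" using kS QP unfolding u_def SL2_def
      by (simp add: det_mul) (metis det_I det_mul mult.commute)
    have dk0: "d (mat 1) k \<ge> 0" using dnn[OF I1 kS] by simp
    have "min (rho k) (d (mat 1) k) < \<delta>" using dk \<epsilon> unfolding e0_def by linarith
    then have rk: "c * rho k \<le> d (mat 1) k" using cd[OF kS] by blast
    have ru: "rho u \<le> C * rho k" unfolding u_def C_def
      by (rule rho_conj[OF QP]) (use P_bounds[OF B(1)[OF z] B(2)] in \<open>auto simp: P_def Q_def\<close>)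
    have rk': "rho k \<le> d (mat 1) k / c" using rk c by (simp add: field_simps)
    have "rho u \<le> C * (d (mat 1) k / c)" using ru rk' C1
      by (smt (verit) mult_left_mono)
    also have "\<dots> < C * (\<epsilon> / c)" using dk c C1 by (simp add: divide_strict_right_mono)
    also have "\<dots> \<le> \<delta>" using \<epsilon> c C1 unfolding e0_def by (simp add: field_simps)
    finally have "rho u < \<delta>" .
    then have "d (mat 1) u \<le> rho u / c" using cd[OF uS] by simp
    also have "\<dots> \<le> C * (d (mat 1) k / c) / c" using \<open>rho u \<le> C * (d (mat 1) k / c)\<close> c
      by (intro divide_right_mono) auto
    also have "\<dots> = (C / c^2) * d (mat 1) k" by (simp add: power2_eq_square)
    also have "\<dots> \<le> l * d (mat 1) k" unfolding l_def using dk0 by (intro mult_right_mono) auto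
    also have "\<dots> < l * \<epsilon>" using dk l1 by simp
    finally have du: "d (mat 1) u < l * \<epsilon>" .
    have hI: "mat 1 \<in> Hgrp \<inter> Uball d (l * \<epsilon>)"
      using I_H dnn[OF I1 I1] l1 \<epsilon> I1 by (auto simp: Uball_def psl_eq_def)
    show ?thesis
      using hI uS du key_eq[of t k \<theta> z] unfolding psl_eq_def Uball_def u_def P_def Q_def
      by blast
  qed
  show ?thesis using main l1 e0 by blast
qed

end
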